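(* Let $0<\beta<1$ and suppose $Y$ has a continuous distribution with support $\mathcal{Y}$, and that: (i) $\operatorname{int}(\mathcal{Y})\cap\operatorname{int}(\mathcal{R}_{\mathcal{X}})$ is connected; (ii) $y\mapsto f(x,y)$ is continuous for every $x\in\mathcal{X}$; (iii) for each $x\in\mathcal{X}$ there exists $x'\in\mathcal{X}$ such that $\operatorname{int}(\mathcal{Y})\cap\operatorname{int}(\mathcal{R}_x\cap\mathcal{R}_{x'})\neq\emptyset$ and $\operatorname{int}(\mathcal{Y})\cap\operatorname{int}(\mathcal{R}_{x'}\setminus\mathcal{R}_x)\neq\emptyset$. Then $\mathcal{R}_{\mathcal{X}}$ satisfies the $\beta$-aggregation condition.
   Context: Let $(\Omega,\mathcal{F},\mathbb{P})$ be a probability space, $Y$ a random vector in $\mathbb{R}^d$ with support $\mathcal{Y}$, $\mathcal{X}\subseteq\mathbb{R}^k$ a set of decisions and $f:\mathcal{X}\times\mathbb{R}^d\to\mathbb{R}$ a loss function with $f(x,Y)$ measurable for all $x$. Write $F_x(z)=\mathbb{P}(f(x,Y)\le z)$ and $F_x^{-1}(\beta)=\inf\{z: F_x(z)\ge\beta\}$. The ($\beta$-)risk region of $x$ is $\mathcal{R}_x=\{y\in\mathbb{R}^d: f(x,y)\ge F_x^{-1}(\beta)\}$ and $\mathcal{R}_{\mathcal{X}}=\bigcup_{x\in\mathcal{X}}\mathcal{R}_x$. A set $\mathcal{R}$ with $\mathcal{R}_{\mathcal{X}}\subseteq\mathcal{R}\subset\mathbb{R}^d$ satisfies the $\beta$-aggregation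 condition if for all $x\in\mathcal{X}$ and all $z'<F_x^{-1}(\beta)$, $\mathbb{P}\big(Y\in\{y: z'<f(x,y)\le F_x^{-1}(\beta)\}\cap\mathcal{R}\big)>0$. $\operatorname{int}$ denotes topological interior. *)

theory Defs
  imports "HOL-Probability.Probability"
begin

definition loss_cdf :: "'w measure \<Rightarrow> ('w \<Rightarrow> 'a) \<Rightarrow> ('b \<Rightarrow> 'a \<Rightarrow> real) \<Rightarrow> 'b \<Rightarrow> real \<Rightarrow> real" where
  "loss_cdf M Y f x z = measure M {w \<in> space M. f x (Y w) \<le> z}"

definition loss_quantile :: "'w measure \<Rightarrow> ('w \<Rightarrow> 'a) \<Rightarrow> ('b \<Rightarrow> 'a \<Rightarrow> real) \<Rightarrow> real \<Rightarrow> 'b \<Rightarrow> real" where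
  "loss_quantile M Y f \<beta> x = Inf {z. loss_cdf M Y f x z \<ge> \<beta>}"

definition risk_region :: "'w measure \<Rightarrow> ('w \<Rightarrow> 'a) \<Rightarrow> ('b \<Rightarrow> 'a \<Rightarrow> real) \<Rightarrow> real \<Rightarrow> 'b \<Rightarrow> 'a set" where
  "risk_region M Y f \<beta> x = {y. f x y \<ge> loss_quantile M Y f \<beta> x}"

definition risk_region_set :: "'w measure \<Rightarrow> ('w \<Rightarrow> 'a) \<Rightarrow> ('b \<Rightarrow> 'a \<Rightarrow> real) \<Rightarrow> real \<Rightarrow> 'b set \<Rightarrow> 'a set" where
  "risk_region_set M Y f \<beta> X = (\<Union>x\<in>X. risk_region M Y f \<beta> x)"

text \<open>Support of the distribution of Y: points all of whose neighbourhoods have positive probability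
  (the smallest closed set of full measure).\<close>
definition rv_support :: "'w measure \<Rightarrow> ('w \<Rightarrow> 'a::metric_space) \<Rightarrow> 'a set" where
  "rv_support M Y = {y. \<forall>e>0. measure M (Y -` ball y e \<inter> space M) > 0}"

text \<open>Positive probability of the event {Y \<in> A}; stated via a measurable sub-event so that it also
  makes sense if {Y \<in> A} is not measurable (for measurable events it is just P(Y \<in> A) > 0).\<close>
definition pos_prob_event :: "'w measure \<Rightarrow> ('w \<Rightarrow> 'a) \<Rightarrow> 'a set \<Rightarrow> bool" where
  "pos_prob_event M Y A = (\<exists>E\<in>sets M. E \<subseteq> {w \<in> space M. Y w \<in> A} \<and> measure M E > 0)"

definition aggregation_condition :: "'w measure \<Rightarrow> ('w \<Rightarrow> 'a) \<Rightarrow> ('b \<Rightarrow> 'a \<Rightarrow> real) \<Rightarrow> real \<Rightarrow> 'b set \<Rightarrow> 'a set \<Rightarrow> bool" where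
  "aggregation_condition M Y f \<beta> X R \<longleftrightarrow>
     risk_region_set M Y f \<beta> X \<subseteq> R \<and>
     (\<forall>x\<in>X. \<forall>z'. z' < loss_quantile M Y f \<beta> x \<longrightarrow>
        pos_prob_event M Y ({y. z' < f x y \<and> f x y \<le> loss_quantile M Y f \<beta> x} \<inter> R))"

end

theory Submission
  imports Defs
begin

theorem mainTheorem3:
  fixes M :: "'w measure" and Y :: "'w \<Rightarrow> 'a::euclidean_space"
    and f :: "'b::euclidean_space \<Rightarrow> 'a \<Rightarrow> real" and X :: "'b set" and \<beta> :: real
  assumes "prob_space M"
    and "Y \<in> borel_measurable M"
    and "\<And>x. (\<lambda>w. f x (Y w)) \<in> borel_measurable M"
    and "0 < \<beta>" and "\<beta> < 1"
    and "\<And>y. measure M {w \<in> space M. Y w = y} = 0"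
    and "connected (interior (rv_support M Y) \<inter> interior (risk_region_set M Y f \<beta> X))"
    and "\<And>x. x \<in> X \<Longrightarrow> continuous_on UNIV (f x)"
    and "\<And>x. x \<in> X \<Longrightarrow> \<exists>x'\<in>X.
           interior (rv_support M Y) \<inter> interior (risk_region M Y f \<beta> x \<inter> risk_region M Y f \<beta> x') \<noteq> {} \<and>
           interior (rv_support M Y) \<inter> interior (risk_region M Y f \<beta> x' - risk_region M Y f \<beta> x) \<noteq> {}"
  shows "aggregation_condition M Y f \<beta> X (risk_region_set M Y f \<beta> X)"
  unfolding aggregation_condition_def
proof (intro conjI ballI allI impI subset_refl)
  fix x z'
  assume xX: "x \<in> X" and z': "z' < loss_quantile M Y f \<beta> x"
  define q where "q = loss_quantile M Y f \<beta> x"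
  define S where "S = interior (rv_support M Y) \<inter> interior (risk_region_set M Y f \<beta> X)"
  have Sconn: "connected S" using assms(7) S_def by simp
  have Sopen: "open S" unfolding S_def by auto
  have cont: "continuous_on UNIV (f x)" using assms(8) xX by blast
  obtain x' where x'X: "x' \<in> X" and
    h1: "interior (rv_support M Y) \<inter> interior (risk_region M Y f \<beta> x \<inter> risk_region M Y f \<beta> x') \<noteq> {}" and
    h2: "interior (rv_support M Y) \<inter> interior (risk_region M Y f \<beta> x' - risk_region M Y f \<beta> x) \<noteq> {}"
    using assms(9)[OF xX] by blast
  have subx: "risk_region M Y f \<beta> x \<subseteq> risk_region_set M Y f \<beta> X"
    using xX unfolding risk_region_set_def by blast
  have subx': "risk_region M Y f \<beta> x' \<subseteq> risk_region_set M Y f \<beta> X"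
    using x'X unfolding risk_region_set_def by blast
  obtain y2 where y2: "y2 \<in> interior (rv_support M Y)" "y2 \<in> interior (risk_region M Y f \<beta> x \<inter> risk_region M Y f \<beta> x')"
    using h1 by blast
  have i2: "interior (risk_region M Y f \<beta> x \<inter> risk_region M Y f \<beta> x') \<subseteq> interior (risk_region_set M Y f \<beta> X)"
    by (rule interior_mono) (use subx in blast)
  have y2S: "y2 \<in> S" unfolding S_def using y2 i2 by blast
  have fy2: "f x y2 \<ge> q" using y2(2) interior_subset unfolding risk_region_def q_def by blast
  obtain y1 where y1: "y1 \<in> interior (rv_support M Y)" "y1 \<in> interior (risk_region M Y f \<beta> x' - risk_region M Y f \<beta> x)"
    using h2 by blast
  have i1: "interior (risk_region M Y f \<beta> x' - risk_region M Y f \<beta> x) \<subseteq> interior (risk_region_set M Y f \<beta> X)"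
    by (rule interior_mono) (use subx' in blast)
  have y1S: "y1 \<in> S" unfolding S_def using y1 i1 by blast
  have fy1: "f x y1 < q" using y1(2) interior_subset unfolding risk_region_def q_def by fastforce
  define c where "c = (max z' (f x y1) + q) / 2"
  have c1: "z' < c" "f x y1 < c" "c < q" using z' fy1 unfolding c_def q_def by auto
  have iconn: "connected (f x ` S)"
    using connected_continuous_image[OF continuous_on_subset[OF cont] Sconn] by simp
  have "c \<in> f x ` S"
    by (rule connectedD_interval[OF iconn, of "f x y1" "f x y2"]) (use y1S y2S c1 fy2 in auto)
  then obtain y where yS: "y \<in> S" and fy: "f x y = c" by blast
  obtain e1 where e1: "e1 > 0" "ball y e1 \<subseteq> S" using Sopen yS open_contains_ball by blast
  define d where "d = min (c - z') (q - c)"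
  have d: "d > 0" using c1 d_def by simp
  have "isCont (f x) y" using cont by (simp add: continuous_on_eq_continuous_at)
  then obtain e2 where e2: "e2 > 0" "\<And>y'. dist y' y < e2 \<Longrightarrow> dist (f x y') (f x y) < d"
    using d by (metis continuous_at_eps_delta)
  define e where "e = min e1 e2"
  have e: "e > 0" using e1 e2 e_def by simp
  define E where "E = Y -` ball y e \<inter> space M"
  have Esets: "E \<in> sets M" unfolding E_def
    using measurable_sets[OF assms(2)] by simp
  have "y \<in> rv_support M Y" using yS interior_subset unfolding S_def by blast
  hence Epos: "measure M E > 0" unfolding E_def rv_support_def using e by blast
  have Esub: "E \<subseteq> {w \<in> space M. Y w \<in> {y. z' < f x y \<and> f x y \<le> loss_quantile M Y f \<beta> x} \<inter> risk_region_set M Y f \<beta> X}"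
  proof
    fix w assume w: "w \<in> E"
    hence wM: "w \<in> space M" and yb: "Y w \<in> ball y e" unfolding E_def by auto
    have "Y w \<in> S" using yb e1 e_def by auto
    hence inR: "Y w \<in> risk_region_set M Y f \<beta> X" unfolding S_def using interior_subset by blast
    have "dist (Y w) y < e2" using yb e_def by (simp add: dist_commute)
    hence "dist (f x (Y w)) c < d" using e2 fy by metis
    hence "z' < f x (Y w) \<and> f x (Y w) \<le> q" unfolding d_def dist_real_def by auto
    thus "w \<in> {w \<in> space M. Y w \<in> {y. z' < f x y \<and> f x y \<le> loss_quantile M Y f \<beta> x} \<inter> risk_region_set M Y f \<beta> X}"
      using wM inR q_def by auto
  qed
  show "pos_prob_event M Y ({y. z' < f x y \<and> f x y \<le> loss_quantile M Y f \<beta> x} \<inter> risk_region_set M Y f \<beta> X)"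
    unfolding pos_prob_event_def using Esets Esub Epos by blast
qed

end
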